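(* Let $\Theta$ and $\Omega=\{\omega_1,\dots,\omega_N\}$ be finite sets and $\rho:2^\Omega\to2^\Theta$ a refining, with induced partition $\Pi_i=\rho(\{\omega_i\})$, $i=1,\dots,N$, of $\Theta$. For each $i$ let $Bel_i$ be a belief function on $\Pi_i$ with mass $m_i$, and let $\overrightarrow{Bel_i}$ be its conditional embedding into $\Theta$. Let $\overrightarrow{Bel}=\overrightarrow{Bel_1}\oplus\cdots\oplus\overrightarrow{Bel_N}$ (Dempster's rule). Then (1) every focal element of $\overrightarrow{Bel}$ is of the form $\bigcup_{i=1}^N e_i$ where, for each $i$, $e_i$ is a focal element of $Bel_i$; and (2) the marginal of $\overrightarrow{Bel}$ on $\Omega$ is the vacuous belief function on $\Omega$ (the one with mass $1$ on $\Omega$).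
   Context: A refining $\rho:2^\Omega\to2^\Theta$ satisfies $\rho(\{\omega\})\ne\emptyset$ for all $\omega$, $\rho(\{\omega\})\cap\rho(\{\omega'\})=\emptyset$ for $\omega\ne\omega'$, $\bigcup_\omega\rho(\{\omega\})=\Theta$, and $\rho(B)=\bigcup_{\omega\in B}\rho(\{\omega\})$. Outer reduction: $\bar\rho(A)=\{\omega\in\Omega:\rho(\{\omega\})\cap A\ne\emptyset\}$ for $A\subseteq\Theta$. Mass functions $m:2^S\to[0,1]$, $m(\emptyset)=0$, $\sum m=1$; focal elements have positive mass; $Bel(A)=\sum_{B\subseteq A}m(B)$. Dempster's rule: $m_\oplus(A)\propto\sum_{B\cap C=A}m_1(B)m_2(C)$ for $A\ne\emptyset$, normalised to sum to $1$. The conditional embedding of a mass $m$ on $\Pi_i$ into $\Theta$ assigns mass $m(E)$ to $E\cup(\Theta\setminus\Pi_i)$ for each $E\subseteq\Pi_i$ and $0$ to all other subsets of $\Theta$. The marginal on $\Omega$ of a mass $m$ on $\Theta$ is $m\!\upharpoonright_\Omega(B)=\sum_{A\subseteq\Theta:\bar\rho(A)=B}m(A)$ for $B\subseteq\Omega$. *)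

theory Defs
  imports Complex_Main
begin

definition refining :: "'w set \<Rightarrow> 't set \<Rightarrow> ('w set \<Rightarrow> 't set) \<Rightarrow> bool" where
  "refining \<Omega> \<Theta> \<rho> \<longleftrightarrow>
     (\<forall>w\<in>\<Omega>. \<rho> {w} \<noteq> {}) \<and>
     (\<forall>w\<in>\<Omega>. \<forall>w'\<in>\<Omega>. w \<noteq> w' \<longrightarrow> \<rho> {w} \<inter> \<rho> {w'} = {}) \<and>
     (\<Union>w\<in>\<Omega>. \<rho> {w}) = \<Theta> \<and>
     (\<forall>B. B \<subseteq> \<Omega> \<longrightarrow> \<rho> B = (\<Union>w\<in>B. \<rho> {w}))"

definition outer_reduction :: "'w set \<Rightarrow> ('w set \<Rightarrow> 't set) \<Rightarrow> 't set \<Rightarrow> 'w set" where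
  "outer_reduction \<Omega> \<rho> A = {w \<in> \<Omega>. \<rho> {w} \<inter> A \<noteq> {}}"

definition is_mass :: "'a set \<Rightarrow> ('a set \<Rightarrow> real) \<Rightarrow> bool" where
  "is_mass S m \<longleftrightarrow> (\<forall>A. 0 \<le> m A \<and> m A \<le> 1) \<and> (\<forall>A. \<not> A \<subseteq> S \<longrightarrow> m A = 0) \<and>
     m {} = 0 \<and> (\<Sum>A\<in>Pow S. m A) = 1"

definition focal :: "('a set \<Rightarrow> real) \<Rightarrow> 'a set \<Rightarrow> bool" where
  "focal m A \<longleftrightarrow> m A > 0"

definition belief :: "('a set \<Rightarrow> real) \<Rightarrow> 'a set \<Rightarrow> real" where
  "belief m A = (\<Sum>B\<in>Pow A. m B)"

definition dempster_unnorm :: "'a set \<Rightarrow> ('a set \<Rightarrow> real) \<Rightarrow> ('a set \<Rightarrow> real) \<Rightarrow> 'a set \<Rightarrow> real" where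
  "dempster_unnorm S m1 m2 A = (\<Sum>(B,C)\<in>{(B,C). B \<subseteq> S \<and> C \<subseteq> S \<and> B \<inter> C = A}. m1 B * m2 C)"

definition dempster :: "'a set \<Rightarrow> ('a set \<Rightarrow> real) \<Rightarrow> ('a set \<Rightarrow> real) \<Rightarrow> 'a set \<Rightarrow> real" where
  "dempster S m1 m2 A =
     (if A = {} then 0
      else dempster_unnorm S m1 m2 A / (\<Sum>A'\<in>Pow S - {{}}. dempster_unnorm S m1 m2 A'))"

fun dempster_list :: "'a set \<Rightarrow> ('a set \<Rightarrow> real) list \<Rightarrow> 'a set \<Rightarrow> real" where
  "dempster_list S [] = (\<lambda>A. if A = S then 1 else 0)"
| "dempster_list S (m # ms) = foldl (dempster S) m ms"

text \<open>Conditional embedding of a mass m on P (a subset of Theta) into Theta: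
  mass m E goes to E \<union> (Theta - P) for E \<subseteq> P.\<close>
definition cond_embed :: "'t set \<Rightarrow> 't set \<Rightarrow> ('t set \<Rightarrow> real) \<Rightarrow> 't set \<Rightarrow> real" where
  "cond_embed \<Theta> P m A = (if \<exists>E. E \<subseteq> P \<and> A = E \<union> (\<Theta> - P) then m (A \<inter> P) else 0)"

definition marginal :: "'w set \<Rightarrow> 't set \<Rightarrow> ('w set \<Rightarrow> 't set) \<Rightarrow> ('t set \<Rightarrow> real) \<Rightarrow> 'w set \<Rightarrow> real" where
  "marginal \<Omega> \<Theta> \<rho> m B = (\<Sum>A\<in>{A. A \<subseteq> \<Theta> \<and> outer_reduction \<Omega> \<rho> A = B}. m A)"

definition vacuous :: "'a set \<Rightarrow> 'a set \<Rightarrow> real" where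
  "vacuous S B = (if B = S then 1 else 0)"

end

theory Submission
  imports Defs
begin

lemma dempster_props:
  fixes S :: "'a set"
  assumes fin: "finite S" and m1: "is_mass S m1" and m2: "is_mass S m2"
    and nc: "\<And>B C. m1 B > 0 \<Longrightarrow> m2 C > 0 \<Longrightarrow> B \<inter> C \<noteq> {}"
  shows "is_mass S (dempster S m1 m2)"
    and "\<And>A. dempster S m1 m2 A > 0 \<Longrightarrow> (\<exists>B C. m1 B > 0 \<and> m2 C > 0 \<and> A = B \<inter> C)"
proof -
  let ?u = "dempster_unnorm S m1 m2"
  let ?h = "\<lambda>(B,C). m1 B * m2 C"
  have nn1: "\<And>B. m1 B \<ge> 0" and nn2: "\<And>B. m2 B \<ge> 0" using m1 m2 unfolding is_mass_def by auto
  have ueq: "?u A = sum ?h {x. x \<in> Pow S \<times> Pow S \<and> (\<lambda>(B,C). B \<inter> C) x = A}" for A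
    unfolding dempster_unnorm_def by (rule sum.cong) auto
  have "(\<Sum>A\<in>Pow S. ?u A) = sum ?h (Pow S \<times> Pow S)"
    unfolding ueq by (rule sum.group) (use fin in auto)
  also have "\<dots> = (\<Sum>B\<in>Pow S. m1 B) * (\<Sum>C\<in>Pow S. m2 C)"
    by (simp add: sum_product sum.cartesian_product)
  also have "\<dots> = 1" using m1 m2 unfolding is_mass_def by simp
  finally have tot: "(\<Sum>A\<in>Pow S. ?u A) = 1" .
  have z: "?u {} = 0"
    unfolding dempster_unnorm_def
  proof (rule sum.neutral, clarify)
    fix B C :: "'a set" assume "B \<inter> C = {}"
    then have "\<not> (m1 B > 0 \<and> m2 C > 0)" using nc by blast
    then show "m1 B * m2 C = 0" using nn1[of B] nn2[of C] by auto
  qed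
  have tot2: "(\<Sum>A\<in>Pow S - {{}}. ?u A) = 1"
    using tot z fin by (simp add: sum_diff1)
  have deq: "dempster S m1 m2 A = (if A = {} then 0 else ?u A)" for A
    unfolding dempster_def tot2 by simp
  have unn: "?u A \<ge> 0" for A
    unfolding dempster_unnorm_def by (rule sum_nonneg) (auto intro!: mult_nonneg_nonneg nn1 nn2)
  have uout: "\<not> A \<subseteq> S \<Longrightarrow> ?u A = 0" for A
    unfolding dempster_unnorm_def by (rule sum.neutral) auto
  have ule: "?u A \<le> 1" for A
  proof (cases "A \<subseteq> S")
    case True
    have "?u A \<le> (\<Sum>A\<in>Pow S. ?u A)"
      by (rule member_le_sum) (use True fin unn in auto)
    then show ?thesis using tot by simp
  next
    case False then show ?thesis using uout by simp
  qed
  have "(\<Sum>A\<in>Pow S. dempster S m1 m2 A) = (\<Sum>A\<in>Pow S - {{}}. dempster S m1 m2 A)"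
  proof -
    have "(\<Sum>A\<in>Pow S. dempster S m1 m2 A) = dempster S m1 m2 {} + (\<Sum>A\<in>Pow S - {{}}. dempster S m1 m2 A)"
      using fin by (intro sum.remove) auto
    then show ?thesis by (simp add: deq)
  qed
  also have "\<dots> = (\<Sum>A\<in>Pow S - {{}}. ?u A)" by (rule sum.cong) (auto simp: deq)
  finally have "(\<Sum>A\<in>Pow S. dempster S m1 m2 A) = 1" using tot2 by simp
  then show "is_mass S (dempster S m1 m2)"
    unfolding is_mass_def using deq unn ule uout by auto
  show "\<exists>B C. m1 B > 0 \<and> m2 C > 0 \<and> A = B \<inter> C" if "dempster S m1 m2 A > 0" for A
  proof -
    have "?u A > 0" using that deq by (auto split: if_splits)
    hence "?u A \<noteq> 0" by simp
    then obtain x where x: "x \<in> {(B,C). B \<subseteq> S \<and> C \<subseteq> S \<and> B \<inter> C = A}" "?h x \<noteq> 0"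
      unfolding dempster_unnorm_def by (rule sum.not_neutral_contains_not_neutral)
    then obtain B C where bc: "B \<subseteq> S" "C \<subseteq> S" "B \<inter> C = A" "m1 B * m2 C \<noteq> 0"
      by (cases x) auto
    then have "m1 B > 0" "m2 C > 0" using nn1[of B] nn2[of C] by (auto simp: less_le)
    then show ?thesis using bc by blast
  qed
qed

lemma embed_props:
  fixes \<Theta> P :: "'t set"
  assumes fin: "finite \<Theta>" and sub: "P \<subseteq> \<Theta>" and mm: "is_mass P m"
  shows "is_mass \<Theta> (cond_embed \<Theta> P m)"
    and "\<And>A. cond_embed \<Theta> P m A > 0 \<Longrightarrow> (\<exists>E. E \<subseteq> P \<and> m E > 0 \<and> A = E \<union> (\<Theta> - P))"
proof -
  let ?c = "cond_embed \<Theta> P m"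
  let ?g = "\<lambda>E. E \<union> (\<Theta> - P)"
  have finP: "finite P" using fin sub finite_subset by blast
  have ceq: "?c (?g E) = m E" if "E \<subseteq> P" for E
  proof -
    have i: "(E \<union> (\<Theta> - P)) \<inter> P = E" using that by blast
    have "\<exists>E'. E' \<subseteq> P \<and> E \<union> (\<Theta> - P) = E' \<union> (\<Theta> - P)" using that by blast
    then show ?thesis unfolding cond_embed_def i by simp
  qed
  have c0: "?c A = 0" if "A \<notin> ?g ` Pow P" for A
    using that unfolding cond_embed_def by (auto simp del: Un_iff)
  have inj: "inj_on ?g (Pow P)" by (rule inj_onI) auto
  have "(\<Sum>A\<in>Pow \<Theta>. ?c A) = (\<Sum>A\<in>?g ` Pow P. ?c A)"
    by (rule sum.mono_neutral_right) (use fin sub c0 in auto)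
  also have "\<dots> = (\<Sum>E\<in>Pow P. ?c (?g E))" using sum.reindex[OF inj] by (simp add: comp_def)
  also have "\<dots> = (\<Sum>E\<in>Pow P. m E)" by (rule sum.cong) (auto simp: ceq)
  also have "\<dots> = 1" using mm unfolding is_mass_def by simp
  finally have tot: "(\<Sum>A\<in>Pow \<Theta>. ?c A) = 1" .
  have "?c {} = 0"
  proof (cases "{} \<in> ?g ` Pow P")
    case True
    then have h: "?g {} = {}" by blast
    have e: "?c (?g {}) = m {}" by (rule ceq) simp
    then have "?c {} = m {}" unfolding h .
    then show ?thesis using mm unfolding is_mass_def by simp
  qed (rule c0)
  moreover have "0 \<le> ?c A \<and> ?c A \<le> 1" for A
  proof -
    have "0 \<le> m B \<and> m B \<le> 1" for B using mm unfolding is_mass_def by blast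
    then show ?thesis unfolding cond_embed_def by simp
  qed
  moreover have "?c A = 0" if "\<not> A \<subseteq> \<Theta>" for A
  proof -
    have "(\<exists>E. E \<subseteq> P \<and> A = E \<union> (\<Theta> - P)) = False"
    proof -
      have False if "E \<subseteq> P" "A = E \<union> (\<Theta> - P)" for E
      proof -
        have "A \<subseteq> \<Theta>" using that sub by blast
        then show False using \<open>\<not> A \<subseteq> \<Theta>\<close> by simp
      qed
      then show ?thesis by blast
    qed
    then show ?thesis unfolding cond_embed_def by (simp only: if_False)
  qed
  ultimately show "is_mass \<Theta> ?c" unfolding is_mass_def using tot by (intro conjI allI impI) simp_all
  show "\<exists>E. E \<subseteq> P \<and> m E > 0 \<and> A = E \<union> (\<Theta> - P)" if "?c A > 0" for A
  proof -
    have "A \<in> ?g ` Pow P" using c0[of A] that by (cases "A \<in> ?g ` Pow P") simp_all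
    then obtain E where E: "E \<subseteq> P" "A = ?g E" by blast
    then have "m E > 0" using that ceq[OF E(1)] by simp
    then show ?thesis using E by blast
  qed
qed

theorem lemma3:
  fixes \<Theta> :: "'t set" and \<Omega> :: "'w set" and \<rho> :: "'w set \<Rightarrow> 't set"
    and N :: nat and \<omega> :: "nat \<Rightarrow> 'w" and m :: "nat \<Rightarrow> 't set \<Rightarrow> real"
  assumes "finite \<Theta>" and "finite \<Omega>" and "N \<ge> 1"
    and "bij_betw \<omega> {1..N} \<Omega>"
    and "refining \<Omega> \<Theta> \<rho>"
    and "\<And>i. i \<in> {1..N} \<Longrightarrow> is_mass (\<rho> {\<omega> i}) (m i)"
  defines "M \<equiv> dempster_list \<Theta> (map (\<lambda>i. cond_embed \<Theta> (\<rho> {\<omega> i}) (m i)) [1..<N+1])"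
  shows "(\<forall>A. focal M A \<longrightarrow>
            (\<exists>e. (\<forall>i\<in>{1..N}. focal (m i) (e i)) \<and> A = (\<Union>i\<in>{1..N}. e i)))
         \<and> marginal \<Omega> \<Theta> \<rho> M = vacuous \<Omega>"
proof -
  note fin = assms(1) and N1 = assms(3) and bij = assms(4) and ref = assms(5) and mm = assms(6)
  define P where "P i = \<rho> {\<omega> i}" for i
  define f where "f i = cond_embed \<Theta> (P i) (m i)" for i
  define F where "F k = foldl (dempster \<Theta>) (f 1) (map f [2..<k+1])" for k
  have om: "\<omega> ` {1..N} = \<Omega>" using bij by (simp add: bij_betw_def)
  have inj: "inj_on \<omega> {1..N}" using bij by (simp add: bij_betw_def)
  have cov: "(\<Union>i\<in>{1..N}. P i) = \<Theta>"
  proof -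
    have "(\<Union>w\<in>\<Omega>. \<rho> {w}) = \<Theta>" using ref unfolding refining_def by (elim conjE)
    then show ?thesis unfolding P_def om[symmetric] by simp
  qed
  have PT: "P i \<subseteq> \<Theta>" if "i \<in> {1..N}" for i using cov that by blast
  have disj: "P i \<inter> P j = {}" if "i \<in> {1..N}" "j \<in> {1..N}" "i \<noteq> j" for i j
  proof -
    have "\<omega> i \<noteq> \<omega> j" using inj that inj_on_contraD by metis
    moreover have "\<omega> i \<in> \<Omega>" "\<omega> j \<in> \<Omega>" using om that by auto
    moreover have "\<forall>w\<in>\<Omega>. \<forall>w'\<in>\<Omega>. w \<noteq> w' \<longrightarrow> \<rho> {w} \<inter> \<rho> {w'} = {}"
      using ref unfolding refining_def by (elim conjE)
    ultimately show ?thesis unfolding P_def by simp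
  qed
  have mP: "is_mass (P i) (m i)" if "i \<in> {1..N}" for i using mm that unfolding P_def by simp
  have mne: "E \<noteq> {}" if "i \<in> {1..N}" "m i E > 0" for i E
    using mP[OF that(1)] that(2) unfolding is_mass_def by auto
  have Fsuc: "F (Suc k) = dempster \<Theta> (F k) (f (Suc k))" if "1 \<le> k" for k
    using that unfolding F_def by simp
  have inv: "k \<le> N \<longrightarrow> is_mass \<Theta> (F k) \<and> (\<forall>A. F k A > 0 \<longrightarrow> (\<exists>e. (\<forall>i\<in>{1..k}. m i (e i) > 0 \<and> e i \<subseteq> P i)
      \<and> A = (\<Union>i\<in>{1..k}. e i) \<union> (\<Theta> - (\<Union>i\<in>{1..k}. P i))))" if "1 \<le> k" for k
    using that
  proof (induct k rule: nat_induct_at_least)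
    case base
    show ?case
    proof
      assume "1 \<le> N"
      then have i1: "1 \<in> {1..N}" by simp
      have F1: "F 1 = f 1" unfolding F_def by simp
      have "is_mass \<Theta> (F 1)" unfolding F1 f_def by (rule embed_props(1)[OF fin PT[OF i1] mP[OF i1]])
      moreover have "\<exists>e. (\<forall>i\<in>{1..1}. m i (e i) > 0 \<and> e i \<subseteq> P i)
      \<and> A = (\<Union>i\<in>{1..1}. e i) \<union> (\<Theta> - (\<Union>i\<in>{1..1}. P i))" if "F 1 A > 0" for A
      proof -
        have "cond_embed \<Theta> (P 1) (m 1) A > 0" using that unfolding F1 f_def .
        from embed_props(2)[OF fin PT[OF i1] mP[OF i1] this]
        obtain E where E: "E \<subseteq> P 1" "m 1 E > 0" "A = E \<union> (\<Theta> - P 1)" by (elim exE conjE)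
        have o: "{1..1::nat} = {1}" by simp
        have E': "0 < m (Suc 0) E" "E \<subseteq> P (Suc 0)" using E by simp_all
        show ?thesis by (intro exI[of _ "\<lambda>_. E"]) (simp add: o E E')
      qed
      ultimately show "is_mass \<Theta> (F 1) \<and> (\<forall>A. F 1 A > 0 \<longrightarrow> (\<exists>e. (\<forall>i\<in>{1..1}. m i (e i) > 0 \<and> e i \<subseteq> P i)
      \<and> A = (\<Union>i\<in>{1..1}. e i) \<union> (\<Theta> - (\<Union>i\<in>{1..1}. P i))))" by blast
    qed
  next
    case (Suc k)
    show ?case
    proof
      assume kN: "Suc k \<le> N"
      then have IH: "is_mass \<Theta> (F k)" and IH2: "\<And>A. F k A > 0 \<Longrightarrow> (\<exists>e. (\<forall>i\<in>{1..k}. m i (e i) > 0 \<and> e i \<subseteq> P i)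
      \<and> A = (\<Union>i\<in>{1..k}. e i) \<union> (\<Theta> - (\<Union>i\<in>{1..k}. P i)))" using Suc by auto
      have sk: "Suc k \<in> {1..N}" using kN by simp
      have emb1: "is_mass \<Theta> (f (Suc k))" unfolding f_def by (rule embed_props(1)[OF fin PT[OF sk] mP[OF sk]])
      note emb2 = embed_props(2)[OF fin PT[OF sk] mP[OF sk], folded f_def]
      have dk: "P i \<inter> P (Suc k) = {}" if "i \<in> {1..k}" for i using disj[of i "Suc k"] that kN by auto
      have PTk: "P i \<subseteq> \<Theta>" if "i \<in> {1..Suc k}" for i using PT that kN by auto
      have nc: "B \<inter> C \<noteq> {}" if "F k B > 0" "f (Suc k) C > 0" for B C
      proof -
        note hB = that(1) and hC = that(2)
        obtain e where e: "\<forall>i\<in>{1..k}. m i (e i) > 0 \<and> e i \<subseteq> P i"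
          "B = (\<Union>i\<in>{1..k}. e i) \<union> (\<Theta> - (\<Union>i\<in>{1..k}. P i))" using IH2[OF hB] by (elim exE conjE)
        obtain E where E: "E \<subseteq> P (Suc k)" "m (Suc k) E > 0" "C = E \<union> (\<Theta> - P (Suc k))"
          using emb2[OF hC] by (elim exE conjE)
        have "E \<noteq> {}" using mne[OF sk E(2)] .
        moreover have "E \<subseteq> B \<inter> C"
        proof
          fix x assume x: "x \<in> E"
          have xP: "x \<in> P (Suc k)" using x E(1) by blast
          have "x \<notin> P i" if "i \<in> {1..k}" for i using dk[OF that] xP by blast
          moreover have "x \<in> \<Theta>" using PTk[of "Suc k"] xP by auto
          ultimately have "x \<in> B" unfolding e(2) by blast
          moreover have "x \<in> C" unfolding E(3) using x by blast
          ultimately show "x \<in> B \<inter> C" by blast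
        qed
        ultimately show ?thesis by blast
      qed
      have "is_mass \<Theta> (F (Suc k))" unfolding Fsuc[OF Suc(1)]
        by (rule dempster_props(1)[of \<Theta> "F k" "f (Suc k)", OF fin IH emb1 nc])
      moreover have "\<exists>e. (\<forall>i\<in>{1..Suc k}. m i (e i) > 0 \<and> e i \<subseteq> P i)
      \<and> A = (\<Union>i\<in>{1..Suc k}. e i) \<union> (\<Theta> - (\<Union>i\<in>{1..Suc k}. P i))" if "F (Suc k) A > 0" for A
      proof -
        have hA: "dempster \<Theta> (F k) (f (Suc k)) A > 0" using that unfolding Fsuc[OF Suc(1)] .
        have "\<exists>B C. F k B > 0 \<and> f (Suc k) C > 0 \<and> A = B \<inter> C"
          by (rule dempster_props(2)[OF fin IH emb1]) (rule nc, assumption+, rule hA)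
        then obtain B C where BC: "F k B > 0" "f (Suc k) C > 0" "A = B \<inter> C" by (elim exE conjE)
        obtain e where e: "\<forall>i\<in>{1..k}. m i (e i) > 0 \<and> e i \<subseteq> P i"
          "B = (\<Union>i\<in>{1..k}. e i) \<union> (\<Theta> - (\<Union>i\<in>{1..k}. P i))" using IH2[OF BC(1)] by (elim exE conjE)
        obtain E where E: "E \<subseteq> P (Suc k)" "m (Suc k) E > 0" "C = E \<union> (\<Theta> - P (Suc k))"
          using emb2[OF BC(2)] by (elim exE conjE)
        define e' where "e' = e(Suc k := E)"
        have iv: "{1..Suc k} = insert (Suc k) {1..k}" using Suc(1) by auto
        have c1: "\<forall>i\<in>{1..Suc k}. m i (e' i) > 0 \<and> e' i \<subseteq> P i"
          using e(1) E unfolding e'_def iv by auto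
        have U: "(\<Union>i\<in>{1..Suc k}. e' i) = E \<union> (\<Union>i\<in>{1..k}. e i)"
          unfolding iv e'_def by auto
        have PU: "(\<Union>i\<in>{1..Suc k}. P i) = P (Suc k) \<union> (\<Union>i\<in>{1..k}. P i)"
          unfolding iv by auto
        have "A = (\<Union>i\<in>{1..Suc k}. e' i) \<union> (\<Theta> - (\<Union>i\<in>{1..Suc k}. P i))"
          unfolding U PU BC(3) e(2) E(3)
        proof (intro equalityI subsetI)
          fix x assume x: "x \<in> ((\<Union>i\<in>{1..k}. e i) \<union> (\<Theta> - (\<Union>i\<in>{1..k}. P i))) \<inter> (E \<union> (\<Theta> - P (Suc k)))"
          show "x \<in> E \<union> (\<Union>i\<in>{1..k}. e i) \<union> (\<Theta> - (P (Suc k) \<union> (\<Union>i\<in>{1..k}. P i)))"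
            using x by auto
        next
          fix x assume x: "x \<in> E \<union> (\<Union>i\<in>{1..k}. e i) \<union> (\<Theta> - (P (Suc k) \<union> (\<Union>i\<in>{1..k}. P i)))"
          show "x \<in> ((\<Union>i\<in>{1..k}. e i) \<union> (\<Theta> - (\<Union>i\<in>{1..k}. P i))) \<inter> (E \<union> (\<Theta> - P (Suc k)))"
          proof -
            have PS: "P (Suc k) \<subseteq> \<Theta>" using PTk[of "Suc k"] by simp
            consider (a) "x \<in> E" | (b) i where "i \<in> {1..k}" "x \<in> e i"
              | (c) "x \<in> \<Theta> - (P (Suc k) \<union> (\<Union>i\<in>{1..k}. P i))" using x by blast
            then show ?thesis
            proof cases
              case a
              have xP: "x \<in> P (Suc k)" using a E(1) by blast
              have "x \<notin> P i" if "i \<in> {1..k}" for i using dk[OF that] xP by blast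
              then show ?thesis using a xP PS by blast
            next
              case (b i)
              have xP: "x \<in> P i" using b e(1) by blast
              have "x \<notin> P (Suc k)" using dk[OF b(1)] xP by blast
              moreover have "x \<in> \<Theta>" using PTk[of i] b(1) xP by auto
              ultimately show ?thesis using b by blast
            next
              case c then show ?thesis by blast
            qed
          qed
        qed
        then show ?thesis using c1 by blast
      qed
      ultimately show "is_mass \<Theta> (F (Suc k)) \<and> (\<forall>A. F (Suc k) A > 0 \<longrightarrow> (\<exists>e. (\<forall>i\<in>{1..Suc k}. m i (e i) > 0 \<and> e i \<subseteq> P i)
      \<and> A = (\<Union>i\<in>{1..Suc k}. e i) \<union> (\<Theta> - (\<Union>i\<in>{1..Suc k}. P i))))" by blast
    qed
  qed
  have MF: "M = F N"
  proof -
    have lt: "(1::nat) < N+1" using N1 by simp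
    have "[1..<N+1] = 1 # [2..<N+1]" by (simp only: upt_conv_Cons[OF lt] Suc_1)
    then show ?thesis unfolding M_def F_def f_def P_def by simp
  qed
  have Mm: "is_mass \<Theta> M" using inv[OF N1] MF by simp
  have Mf: "\<exists>e. (\<forall>i\<in>{1..N}. m i (e i) > 0 \<and> e i \<subseteq> P i) \<and> A = (\<Union>i\<in>{1..N}. e i)" if "M A > 0" for A
    using inv[OF N1] that unfolding MF cov by simp
  have part1: "\<forall>A. focal M A \<longrightarrow> (\<exists>e. (\<forall>i\<in>{1..N}. focal (m i) (e i)) \<and> A = (\<Union>i\<in>{1..N}. e i))"
    unfolding focal_def using Mf by blast
  have red: "outer_reduction \<Omega> \<rho> A = \<Omega>" if "M A > 0" for A
  proof -
    note hA = that
    obtain e where e: "\<forall>i\<in>{1..N}. m i (e i) > 0 \<and> e i \<subseteq> P i" "A = (\<Union>i\<in>{1..N}. e i)"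
      using Mf[OF hA] by (elim exE conjE)
    have "\<rho> {w} \<inter> A \<noteq> {}" if "w \<in> \<Omega>" for w
    proof -
      have "w \<in> \<omega> ` {1..N}" using om that by simp
      then obtain i where i: "i \<in> {1..N}" "w = \<omega> i" by blast
      have "e i \<noteq> {}" using mne[OF i(1)] e(1) i(1) by blast
      moreover have "e i \<subseteq> \<rho> {w} \<inter> A" using e i unfolding P_def by blast
      ultimately show ?thesis by blast
    qed
    then show ?thesis unfolding outer_reduction_def by blast
  qed
  have Mnn: "M A \<ge> 0" for A using Mm unfolding is_mass_def by blast
  have Mz: "M A = 0" if "outer_reduction \<Omega> \<rho> A \<noteq> \<Omega>" for A
    using red[of A] Mnn[of A] that by linarith
  have part2: "marginal \<Omega> \<Theta> \<rho> M B = vacuous \<Omega> B" for B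
  proof (cases "B = \<Omega>")
    case True
    have "marginal \<Omega> \<Theta> \<rho> M B = (\<Sum>A\<in>Pow \<Theta>. M A)"
      unfolding marginal_def True
      by (rule sum.mono_neutral_left) (use fin Mz in auto)
    also have "\<dots> = 1" using Mm unfolding is_mass_def by simp
    finally show ?thesis unfolding vacuous_def using True by simp
  next
    case False
    have "marginal \<Omega> \<Theta> \<rho> M B = 0"
      unfolding marginal_def by (rule sum.neutral) (use False Mz in auto)
    then show ?thesis unfolding vacuous_def using False by simp
  qed
  show ?thesis using part1 part2 by blast
qed


end
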